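(* Let $\mathcal G=((V,E),(V_1,V_2,V_\Diamond),\delta,w)$ be a stochastic game and let $\mathsf r$ be a real vector indexed by $V$ that satisfies the Bellman condition, with classes $C_1,\dots,C_k$. Then for every $1\le i\le k$, $\mathcal G_{C_i}$ is a stochastic game, i.e., every vertex of $\mathcal G_{C_i}$ has at least one out-neighbour in $\mathcal G_{C_i}$ and for every probabilistic vertex of $\mathcal G_{C_i}$ the probabilities of its out-edges in $\mathcal G_{C_i}$ sum to $1$.
   Context: A stochastic game is $\mathcal{G}=((V,E),(V_1,V_2,V_\Diamond),\delta,w)$: a finite directed graph $(V,E)$ in which every vertex $v$ has a nonempty out-neighbour set $E(v)$, a partition of $V$ into Player 1, Player 2 and probabilistic vertices, a function $\delta$ giving each $v\in V_\Diamond$ a probability distribution $\delta(v)$ on $E(v)$, positive on every out-neighbour, and payoffs $w:E\to\mathbb{Q}$. For a real vector $\mathsf r=(r_v)_{v\in V}$, its classes $C_1,\dots,C_k$ are the maximal nonempty sets of vertices on which $\mathsf r$ is constant. A vertex $v\in C_i$ is a boundary vertex if $v\in V_\Diamond$ and $E(v)\not\subseteq C_i$; $\mathrm{Bnd}_i$ is the set of boundary vertices of $C_i$. $\mathcal G_{C_i}$ is obtained by restricting $\mathcal G$ to the vertices of $C_i$ (keeping the edges of $\mathcal G$ between vertices of $C_i$, ownership, probabilities and payoffs) and changing every vertex of $\mathrm{Bnd}_i$ into an absorbing vertex whose only out-edge is a self-loop (probability 1, payoff 0). $\mathsf r$ satisfies the Bellman condition if for every $v$: $r_v=\max_{v'\in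 E(v)}r_{v'}$ if $v\in V_1$, $r_v=\min_{v'\in E(v)}r_{v'}$ if $v\in V_2$, $r_v=\sum_{v'\in E(v)}\delta(v)(v')r_{v'}$ if $v\in V_\Diamond$. *)

theory Defs
  imports Complex_Main
begin

record 'v sgame =
  verts :: "'v set"
  edges :: "('v \<times> 'v) set"
  V1 :: "'v set"
  V2 :: "'v set"
  Vp :: "'v set"
  delta :: "'v \<Rightarrow> 'v \<Rightarrow> real"
  payoff :: "'v \<times> 'v \<Rightarrow> rat"

definition succs :: "('v, 'a) sgame_scheme \<Rightarrow> 'v \<Rightarrow> 'v set" where
  "succs G v = {u. (v, u) \<in> edges G}"

definition stochastic_game :: "('v, 'a) sgame_scheme \<Rightarrow> bool" where
  "stochastic_game G \<longleftrightarrow>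
     finite (verts G) \<and>
     edges G \<subseteq> verts G \<times> verts G \<and>
     (\<forall>v \<in> verts G. succs G v \<noteq> {}) \<and>
     V1 G \<union> V2 G \<union> Vp G = verts G \<and>
     V1 G \<inter> V2 G = {} \<and> V1 G \<inter> Vp G = {} \<and> V2 G \<inter> Vp G = {} \<and>
     (\<forall>v \<in> Vp G. (\<forall>u \<in> succs G v. delta G v u > 0) \<and>
                  (\<Sum>u \<in> succs G v. delta G v u) = 1)"

definition is_class :: "('v, 'a) sgame_scheme \<Rightarrow> ('v \<Rightarrow> real) \<Rightarrow> 'v set \<Rightarrow> bool" where
  "is_class G r C \<longleftrightarrow> C \<noteq> {} \<and> (\<exists>c. C = {v \<in> verts G. r v = c})"

definition bnd :: "('v, 'a) sgame_scheme \<Rightarrow> 'v set \<Rightarrow> 'v set" where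
  "bnd G C = {v \<in> C. v \<in> Vp G \<and> \<not> succs G v \<subseteq> C}"

definition restrict_game :: "('v, 'a) sgame_scheme \<Rightarrow> 'v set \<Rightarrow> 'v sgame" where
  "restrict_game G C =
     \<lparr> verts = C,
       edges = {(v, u). (v, u) \<in> edges G \<and> v \<in> C - bnd G C \<and> u \<in> C}
               \<union> {(b, b) | b. b \<in> bnd G C},
       V1 = V1 G \<inter> C,
       V2 = V2 G \<inter> C,
       Vp = Vp G \<inter> C,
       delta = (\<lambda>v u. if v \<in> bnd G C then (if u = v then 1 else 0) else delta G v u),
       payoff = (\<lambda>(v, u). if v \<in> bnd G C then 0 else payoff G (v, u)) \<rparr>"

definition bellman :: "('v, 'a) sgame_scheme \<Rightarrow> ('v \<Rightarrow> real) \<Rightarrow> bool" where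
  "bellman G r \<longleftrightarrow>
     (\<forall>v \<in> V1 G. r v = Max (r ` succs G v)) \<and>
     (\<forall>v \<in> V2 G. r v = Min (r ` succs G v)) \<and>
     (\<forall>v \<in> Vp G. r v = (\<Sum>u \<in> succs G v. delta G v u * r u))"

end

theory Submission
  imports Defs
begin

lemma succs_restrict:
  assumes "v \<in> C"
  shows "succs (restrict_game G C) v = (if v \<in> bnd G C then {v} else succs G v \<inter> C)"
  using assms unfolding succs_def restrict_game_def by auto

theorem proposition3:
  fixes G :: "'v sgame" and r :: "'v \<Rightarrow> real" and C :: "'v set"
  assumes "stochastic_game G"
    and "bellman G r"
    and "is_class G r C"
  shows "stochastic_game (restrict_game G C)"
proof -
  note sg = assms(1)[unfolded stochastic_game_def]
  have finV: "finite (verts G)" and EV: "edges G \<subseteq> verts G \<times> verts G"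
    and sne0: "\<forall>v \<in> verts G. succs G v \<noteq> {}"
    and part: "V1 G \<union> V2 G \<union> Vp G = verts G"
    and d12: "V1 G \<inter> V2 G = {}" and d1p: "V1 G \<inter> Vp G = {}" and d2p: "V2 G \<inter> Vp G = {}"
    and pr: "\<forall>v \<in> Vp G. (\<forall>u \<in> succs G v. delta G v u > 0) \<and>
                  (\<Sum>u \<in> succs G v. delta G v u) = 1"
    using sg by simp_all
  obtain c where Cc: "C = {v \<in> verts G. r v = c}" using assms(3) unfolding is_class_def by blast
  have CV: "C \<subseteq> verts G" using Cc by auto
  have fin: "\<And>v. finite (succs G v)"
  proof -
    fix v
    have "succs G v \<subseteq> verts G" using EV unfolding succs_def by auto
    thus "finite (succs G v)" using finV finite_subset by metis
  qed
  have ne: "\<And>v. v \<in> C \<Longrightarrow> succs (restrict_game G C) v \<noteq> {}"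
  proof -
    fix v assume vC: "v \<in> C"
    show "succs (restrict_game G C) v \<noteq> {}"
    proof (cases "v \<in> bnd G C")
      case True then show ?thesis using succs_restrict[where G=G, OF vC] by (simp add: True)
    next
      case False
      have vV: "v \<in> verts G" and rv: "r v = c" using vC Cc by auto
      have sne: "succs G v \<noteq> {}" using sne0 vV by blast
      have sV: "succs G v \<subseteq> verts G" using EV unfolding succs_def by auto
      have "\<exists>u \<in> succs G v. r u = r v"
      proof -
        have "v \<in> V1 G \<or> v \<in> V2 G \<or> v \<in> Vp G" using part vV by blast
        moreover
        { assume "v \<in> V1 G"
          then have "r v = Max (r ` succs G v)" using assms(2) unfolding bellman_def by blast
          moreover have "Max (r ` succs G v) \<in> r ` succs G v" using fin sne by simp
          ultimately have ?thesis by (metis imageE) }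
        moreover
        { assume "v \<in> V2 G"
          then have "r v = Min (r ` succs G v)" using assms(2) unfolding bellman_def by blast
          moreover have "Min (r ` succs G v) \<in> r ` succs G v" using fin sne by simp
          ultimately have ?thesis by (metis imageE) }
        moreover
        { assume "v \<in> Vp G"
          then have "succs G v \<subseteq> C" using False vC unfolding bnd_def by auto
          then have ?thesis using sne vC Cc by auto }
        ultimately show ?thesis by blast
      qed
      then obtain u where "u \<in> succs G v" "r u = r v" by blast
      then have "u \<in> succs G v \<inter> C" using sV rv Cc by auto
      then show ?thesis using succs_restrict[where G=G, OF vC] False by auto
    qed
  qed
  have prob: "\<And>v. v \<in> Vp G \<inter> C \<Longrightarrow>
      (\<forall>u \<in> succs (restrict_game G C) v. delta (restrict_game G C) v u > 0) \<and>
      (\<Sum>u \<in> succs (restrict_game G C) v. delta (restrict_game G C) v u) = 1"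
  proof -
    fix v assume v: "v \<in> Vp G \<inter> C"
    show "(\<forall>u \<in> succs (restrict_game G C) v. delta (restrict_game G C) v u > 0) \<and>
      (\<Sum>u \<in> succs (restrict_game G C) v. delta (restrict_game G C) v u) = 1"
    proof (cases "v \<in> bnd G C")
      case True then show ?thesis using succs_restrict[of v C G] v
        by (simp add: restrict_game_def)
    next
      case False
      then have "succs G v \<subseteq> C" using v unfolding bnd_def by auto
      then have "succs (restrict_game G C) v = succs G v" using succs_restrict[of v C G] v False by auto
      then show ?thesis using pr v False by (simp add: restrict_game_def)
    qed
  qed
  show ?thesis unfolding stochastic_game_def
  proof (intro conjI)
    show "finite (verts (restrict_game G C))" using CV finV finite_subset
      by (auto simp: restrict_game_def)
    show "edges (restrict_game G C) \<subseteq> verts (restrict_game G C) \<times> verts (restrict_game G C)"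
      by (auto simp: restrict_game_def bnd_def)
    show "\<forall>v\<in>verts (restrict_game G C). succs (restrict_game G C) v \<noteq> {}"
      using ne by (simp add: restrict_game_def)
    show "V1 (restrict_game G C) \<union> V2 (restrict_game G C) \<union> Vp (restrict_game G C) = verts (restrict_game G C)"
      using part CV by (auto simp: restrict_game_def)
    show "V1 (restrict_game G C) \<inter> V2 (restrict_game G C) = {}"
      using d12 by (auto simp: restrict_game_def)
    show "V1 (restrict_game G C) \<inter> Vp (restrict_game G C) = {}"
      using d1p by (auto simp: restrict_game_def)
    show "V2 (restrict_game G C) \<inter> Vp (restrict_game G C) = {}"
      using d2p by (auto simp: restrict_game_def)
    show "\<forall>v\<in>Vp (restrict_game G C).
       (\<forall>u\<in>succs (restrict_game G C) v. 0 < delta (restrict_game G C) v u) \<and>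
       (\<Sum>u\<in>succs (restrict_game G C) v. delta (restrict_game G C) v u) = 1"
      using prob by (simp add: restrict_game_def)
  qed
qed

end
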